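(* Let $\mathbb K$ be an algebraically closed field, let $n\ge 1$ and $\mu\ge 0$ be integers with $\mu<\lfloor n/2\rfloor$, and let $(a,b,c)\in\mathcal P^\mu_n$. Let $\epsilon$ be a new variable. Then there exists $(a_\epsilon,b_\epsilon,c_\epsilon)\in\mathbb K[\epsilon,t]^3$ such that, regarded as univariate polynomials in $t$ over $\mathbb K(\epsilon)$, the following hold: (i) $\gcd(a_\epsilon,b_\epsilon,c_\epsilon)=1$; (ii) $\max\{\deg_t a_\epsilon,\deg_t b_\epsilon,\deg_t c_\epsilon\}=n$; (iii) $\mu(a_\epsilon,b_\epsilon,c_\epsilon)=\mu(a,b,c)+1$ (the class being computed over the field $\mathbb K(\epsilon)$); (iv) $(a_\epsilon,b_\epsilon,c_\epsilon)|_{\epsilon=0}=(a,b,c)$.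
   Context: For a field $F$ and $a,b,c\in F[t]$, the syzygy module is $\mathrm{Syz}(a,b,c)=\{(A,B,C)\in F[t]^3: Aa+Bb+Cc=0\}$. The degree of a vector $(A,B,C)$ is $\deg(A,B,C)=\max\{\deg A,\deg B,\deg C\}$. The class of $(a,b,c)$ is $\mu(a,b,c)=\min\{\deg(A,B,C): (A,B,C)\in \mathrm{Syz}(a,b,c)\setminus\{0\}\}$. $\mathbb K[t]_n$ denotes polynomials of degree $\le n$; $\mathcal P_n\subset \mathbb K[t]_n^3$ is the set of triples $(a,b,c)$ with $c\neq 0$, $\gcd(a,b,c)=1$ and $\max\{\deg a,\deg b,\deg c\}=n$; and $\mathcal P^\mu_n=\{(a,b,c)\in\mathcal P_n:\mu(a,b,c)=\mu\}$. *)

theory Defs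
  imports "HOL-Computational_Algebra.Polynomial" "HOL-Computational_Algebra.Fraction_Field"
begin

definition gcd3_one :: "'a::comm_semiring_1 \<Rightarrow> 'a \<Rightarrow> 'a \<Rightarrow> bool" where
  "gcd3_one a b c \<longleftrightarrow> (\<forall>d. d dvd a \<and> d dvd b \<and> d dvd c \<longrightarrow> d dvd 1)"

definition deg3 :: "'a::zero poly \<Rightarrow> 'a poly \<Rightarrow> 'a poly \<Rightarrow> nat" where
  "deg3 A B C = max (degree A) (max (degree B) (degree C))"

definition syz :: "'a::field poly \<Rightarrow> 'a poly \<Rightarrow> 'a poly \<Rightarrow> ('a poly \<times> 'a poly \<times> 'a poly) set" where
  "syz a b c = {(A, B, C). A * a + B * b + C * c = 0}"

definition syz_class :: "'a::field poly \<Rightarrow> 'a poly \<Rightarrow> 'a poly \<Rightarrow> nat" where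
  "syz_class a b c = (LEAST d. \<exists>A B C. (A, B, C) \<in> syz a b c \<and> (A, B, C) \<noteq> (0, 0, 0) \<and> deg3 A B C = d)"

definition Pn :: "nat \<Rightarrow> ('a::field poly \<times> 'a poly \<times> 'a poly) set" where
  "Pn n = {(a, b, c). c \<noteq> 0 \<and> gcd3_one a b c \<and> deg3 a b c = n}"

definition Pmu :: "nat \<Rightarrow> nat \<Rightarrow> ('a::field poly \<times> 'a poly \<times> 'a poly) set" where
  "Pmu mu n = {(a, b, c) \<in> Pn n. syz_class a b c = mu}"

(* elements of K[eps,t] are represented as 'a poly poly: polynomials in t whose
   coefficients are polynomials in eps *)
definition to_Keps :: "'a::field poly poly \<Rightarrow> 'a poly fract poly" where
  "to_Keps P = map_poly (\<lambda>q. Fract q 1) P"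

definition eval_eps0 :: "'a::field poly poly \<Rightarrow> 'a poly" where
  "eval_eps0 P = map_poly (\<lambda>q. poly q 0) P"

end

theory Submission
  imports Defs "HOL-Computational_Algebra.Polynomial_Factorial"
begin


lemma coeff_mult_bound:
  fixes p q :: "'b::comm_semiring_1 poly"
  assumes "degree p \<le> i" "degree q \<le> j"
  shows "coeff (p*q) (i+j) = coeff p i * coeff q j"
proof -
  have "coeff (p*q) (i+j) = (\<Sum>k\<le>i+j. coeff p k * coeff q (i+j-k))" by (simp add: coeff_mult)
  also have "\<dots> = (\<Sum>k\<le>i+j. if k = i then coeff p i * coeff q j else 0)"
  proof (rule sum.cong)
    fix k assume "k \<in> {..i+j}"
    show "coeff p k * coeff q (i+j-k) = (if k = i then coeff p i * coeff q j else 0)"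
    proof (cases "k < i")
      case True then have "coeff q (i+j-k) = 0" using assms(2) by (intro coeff_eq_0) auto
      with True show ?thesis by auto
    next
      case False
      show ?thesis
      proof (cases "k = i")
        case False
        with \<open>\<not> k < i\<close> have "coeff p k = 0" using assms(1) by (intro coeff_eq_0) auto
        with False show ?thesis by auto
      qed auto
    qed
  qed simp
  also have "\<dots> = coeff p i * coeff q j" by simp
  finally show ?thesis .
qed

lemma bezout3:
  fixes a b c :: "'b::field poly"
  assumes "gcd3_one a b c"
  shows "\<exists>x y z. x*a + y*b + z*c = 1"
proof -
  define I where "I = {g. g \<noteq> 0 \<and> (\<exists>x y z. g = x*a + y*b + z*c)}"
  have ne: "\<not> (a = 0 \<and> b = 0 \<and> c = 0)"
  proof
    assume "a = 0 \<and> b = 0 \<and> c = 0"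
    then have "(0::'b poly) dvd 1" using assms unfolding gcd3_one_def by auto
    then show False by simp
  qed
  have "\<exists>g. g \<in> I"
  proof (cases "a = 0")
    case False
    have "a = 1*a + 0*b + 0*c" by simp
    then have "a \<in> I" unfolding I_def using False by blast
    then show ?thesis by blast
  next
    case a0: True
    show ?thesis
    proof (cases "b = 0")
      case False
      have "b = 0*a + 1*b + 0*c" by simp
      then have "b \<in> I" unfolding I_def using False by blast
      then show ?thesis by blast
    next
      case True
      with a0 ne have "c \<noteq> 0" by simp
      have "c = 0*a + 0*b + 1*c" by simp
      then have "c \<in> I" unfolding I_def using \<open>c \<noteq> 0\<close> by blast
      then show ?thesis by blast
    qed
  qed
  then obtain g0 where "g0 \<in> I" by blast
  from ex_has_least_nat[of "\<lambda>g. g \<in> I", OF this, of degree]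
  obtain g where gI: "g \<in> I" and gmin: "\<And>h. h \<in> I \<Longrightarrow> degree g \<le> degree h"
    by blast
  from gI obtain x y z where g: "g = x*a + y*b + z*c" and g0: "g \<noteq> 0" unfolding I_def by blast
  have dv: "g dvd u" if u: "\<exists>x y z. u = x*a + y*b + z*c" for u
  proof (rule ccontr)
    assume nd: "\<not> g dvd u"
    then have m0: "u mod g \<noteq> 0" by (simp add: mod_eq_0_iff_dvd)
    from u obtain x' y' z' where u': "u = x'*a + y'*b + z'*c" by blast
    have "u mod g = u - (u div g) * g" by (simp add: minus_div_mult_eq_mod)
    also have "\<dots> = (x' - (u div g)*x)*a + (y' - (u div g)*y)*b + (z' - (u div g)*z)*c"
      unfolding u' g by (simp add: algebra_simps)
    finally have "u mod g \<in> I" using m0 unfolding I_def by blast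
    then have "degree g \<le> degree (u mod g)" by (rule gmin)
    moreover have "degree (u mod g) < degree g" using degree_mod_less'[OF g0 m0] .
    ultimately show False by simp
  qed
  have "g dvd a" by (rule dv) (rule exI[of _ 1], rule exI[of _ 0], rule exI[of _ 0], simp)
  moreover have "g dvd b" by (rule dv) (rule exI[of _ 0], rule exI[of _ 1], rule exI[of _ 0], simp)
  moreover have "g dvd c" by (rule dv) (rule exI[of _ 0], rule exI[of _ 0], rule exI[of _ 1], simp)
  ultimately have "g dvd 1" using assms unfolding gcd3_one_def by blast
  then obtain k where "1 = g * k" by (erule dvdE)
  then have "(k*x)*a + (k*y)*b + (k*z)*c = 1" unfolding g by (simp add: algebra_simps)
  then show ?thesis by blast
qed

lemma cross_zero_par1:
  fixes xa xb xc ya yb yc za zb zc :: "'b::comm_ring_1"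
  assumes "xa*yb = xb*ya" "xa*yc = xc*ya" "za*ya+zb*yb+zc*yc = 1"
  shows "xa = (za*xa+zb*xb+zc*xc)*ya"
proof -
  have "xa = xa*(za*ya+zb*yb+zc*yc)" using assms(3) by simp
  also have "\<dots> = za*xa*ya + zb*(xa*yb) + zc*(xa*yc)" by (simp add: algebra_simps)
  also have "\<dots> = za*xa*ya + zb*(xb*ya) + zc*(xc*ya)" by (simp only: assms(1,2))
  also have "\<dots> = (za*xa+zb*xb+zc*xc)*ya" by (simp add: algebra_simps)
  finally show ?thesis .
qed

lemma cross_zero_par:
  fixes xa xb xc ya yb yc za zb zc :: "'b::comm_ring_1"
  assumes "xb*yc = xc*yb" "xc*ya = xa*yc" "xa*yb = xb*ya" "za*ya+zb*yb+zc*yc = 1"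
  shows "xa = (za*xa+zb*xb+zc*xc)*ya" "xb = (za*xa+zb*xb+zc*xc)*yb" "xc = (za*xa+zb*xb+zc*xc)*yc"
proof -
  show "xa = (za*xa+zb*xb+zc*xc)*ya" using assms by (intro cross_zero_par1) auto
  have "xb = (zb*xb+zc*xc+za*xa)*yb" using assms by (intro cross_zero_par1) (auto simp: algebra_simps)
  then show "xb = (za*xa+zb*xb+zc*xc)*yb" by (simp add: algebra_simps)
  have "xc = (zc*xc+za*xa+zb*xb)*yc" using assms by (intro cross_zero_par1) (auto simp: algebra_simps)
  then show "xc = (za*xa+zb*xb+zc*xc)*yc" by (simp add: algebra_simps)
qed



abbreviation ev0 :: "'a::field poly poly \<Rightarrow> 'a poly" where "ev0 \<equiv> eval_eps0"

lemma ev0_coeff: "coeff (ev0 P) i = poly (coeff P i) 0"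
  unfolding eval_eps0_def by (simp add: coeff_map_poly)

lemma ev0_add [simp]: "ev0 (P + Q) = ev0 P + ev0 Q"
  by (intro poly_eqI) (simp add: ev0_coeff)
lemma ev0_diff [simp]: "ev0 (P - Q) = ev0 P - ev0 Q"
  by (intro poly_eqI) (simp add: ev0_coeff)
lemma ev0_mult [simp]: "ev0 (P * Q) = ev0 P * ev0 Q"
  by (intro poly_eqI) (simp add: ev0_coeff coeff_mult poly_sum)
lemma ev0_smult [simp]: "ev0 (smult c P) = smult (poly c 0) (ev0 P)"
  by (intro poly_eqI) (simp add: ev0_coeff)
lemma ev0_0 [simp]: "ev0 0 = 0"
  by (intro poly_eqI) (simp add: ev0_coeff)

definition lift :: "'a::field poly \<Rightarrow> 'a poly poly" where
  "lift p = map_poly (\<lambda>c. [:c:]) p"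

lemma coeff_lift [simp]: "coeff (lift p) i = [:coeff p i:]"
  unfolding lift_def by (simp add: coeff_map_poly)
lemma lift_add [simp]: "lift (p + q) = lift p + lift q"
  by (intro poly_eqI) simp
lemma lift_diff [simp]: "lift (p - q) = lift p - lift q"
  by (intro poly_eqI) simp
lemma sum_const_poly: "(\<Sum>i\<in>A. [:f i:]) = [:sum f A:]"
  by (induction A rule: infinite_finite_induct) simp_all

lemma lift_mult [simp]: "lift (p * q) = lift p * lift q"
  by (rule poly_eqI) (simp add: coeff_mult sum_const_poly mult.commute)
lemma degree_lift [simp]: "degree (lift p) = degree p"
  unfolding lift_def by (rule degree_map_poly) simp
lemma ev0_lift [simp]: "ev0 (lift p) = p"
  by (intro poly_eqI) (simp add: ev0_coeff)
lemma lift_0 [simp]: "lift 0 = 0"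
  by (intro poly_eqI) simp

lemma to_Keps_eq: "to_Keps P = fract_poly P"
  unfolding to_Keps_def to_fract_def by simp

lemma degree_fract_poly [simp]: "degree (fract_poly p) = degree p"
  by (rule degree_map_poly) simp

lemma clear_denom:
  fixes q :: "'b::idom fract poly"
  shows "\<exists>D r. D \<noteq> 0 \<and> smult (to_fract D) q = fract_poly r"
proof (induction q)
  case 0
  show ?case by (rule exI[of _ 1], rule exI[of _ 0]) simp
next
  case (pCons x q)
  then obtain D' r' where D': "D' \<noteq> 0" "smult (to_fract D') q = fract_poly r'" by blast
  obtain u w where x: "x = Fract u w" "w \<noteq> 0" by (cases x) auto
  have "smult (to_fract (w*D')) (pCons x q) = fract_poly (pCons (u*D') (smult w r'))"
  proof -
    have "to_fract (w*D') * x = to_fract (u*D')"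
      using x by (simp add: to_fract_def eq_fract)
    moreover have "smult (to_fract (w*D')) q = smult (to_fract w) (smult (to_fract D') q)"
      by simp
    then have "smult (to_fract (w*D')) q = smult (to_fract w) (fract_poly r')"
      using D'(2) by simp
    ultimately show ?thesis by (simp add: map_poly_pCons)
  qed
  moreover have "w * D' \<noteq> 0" using x D' by simp
  ultimately show ?case by blast
qed

definition eps :: "'a::field poly" where "eps = [:0,1:]"

lemma eps_normalize:
  fixes f :: "'a::field poly poly"
  assumes "f \<noteq> 0"
  shows "\<exists>k g. f = smult (eps^k) g \<and> ev0 g \<noteq> 0"
  using assms
proof (induction "degree (lead_coeff f)" arbitrary: f rule: less_induct)
  case less
  show ?case
  proof (cases "ev0 f = 0")
    case False
    then show ?thesis by (intro exI[of _ 0] exI[of _ f]) simp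
  next
    case True
    then have pc: "poly (coeff f i) 0 = 0" for i
      by (metis ev0_coeff coeff_0)
    have dv: "eps dvd coeff f i" for i
      using pc[of i] dvd_iff_poly_eq_0[of 0 "coeff f i"] by (simp add: eps_def)
    define g where "g = map_poly (\<lambda>c. c div eps) f"
    have fg: "f = smult eps g"
      by (intro poly_eqI) (simp add: g_def coeff_map_poly dv)
    have e0: "eps \<noteq> (0::'a poly)" by (simp add: eps_def)
    have g0: "g \<noteq> 0" using less.prems fg by auto
    have dg: "degree f = degree g" using fg e0 by simp
    have "lead_coeff f = eps * lead_coeff g" using fg dg by simp
    then have "degree (lead_coeff f) = Suc (degree (lead_coeff g))"
      using g0 e0 by (simp add: degree_mult_eq eps_def)
    then have "degree (lead_coeff g) < degree (lead_coeff f)" by simp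
    from less.hyps[OF this g0] obtain k h where "g = smult (eps^k) h" "ev0 h \<noteq> 0" by blast
    then have "f = smult (eps^(Suc k)) h" using fg by simp
    with \<open>ev0 h \<noteq> 0\<close> show ?thesis by blast
  qed
qed

lemma ev0_eps [simp]: "poly eps 0 = (0::'a::field)"
  by (simp add: eps_def)

lemma eps_cancel:
  fixes X Y :: "'a::field poly poly"
  assumes "smult (eps^a) X = smult (eps^b) Y" "ev0 X \<noteq> 0" "ev0 Y \<noteq> 0"
  shows "X = Y"
proof -
  have e0: "eps \<noteq> (0::'a poly)" by (simp add: eps_def)
  have main: "X = Y" if "smult (eps^a) X = smult (eps^b) Y" "ev0 X \<noteq> 0" "ev0 Y \<noteq> 0" "a \<le> b"
    for a b X Y
  proof -
    have "smult (eps^a) X = smult (eps^a) (smult (eps^(b-a)) Y)"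
      using that by (simp flip: power_add)
    moreover have "eps^a \<noteq> 0" by (simp add: eps_def)
    ultimately have XY: "X = smult (eps^(b-a)) Y" using smult_cancel by blast
    show ?thesis
    proof (cases "b - a")
      case 0 then show ?thesis using XY by simp
    next
      case (Suc m)
      then have "ev0 X = 0" using XY by (simp add: poly_power)
      with that show ?thesis by simp
    qed
  qed
  show ?thesis
  proof (cases "a \<le> b")
    case True then show ?thesis using main assms by blast
  next
    case False then show ?thesis using main[of b Y a X] assms by simp
  qed
qed



lemma degree_ev0_le: "degree (ev0 P) \<le> degree P"
  unfolding eval_eps0_def by (rule map_poly_degree_leq)

lemma eps_ne0 [simp]: "eps \<noteq> (0::'a::field poly)" by (simp add: eps_def)

lemma lemV:
  fixes d0 d1 P :: "'a::field poly poly"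
  assumes dv: "fract_poly d0 dvd fract_poly P" and d0: "d0 = smult (eps^b) d1"
    and e1: "ev0 d1 \<noteq> 0" and eP: "ev0 P \<noteq> 0"
  shows "\<exists>D' r'. poly D' 0 \<noteq> 0 \<and> smult D' P = d1 * r'"
proof -
  from dv obtain q where q: "fract_poly P = fract_poly d0 * q" by (erule dvdE)
  obtain D r where D: "D \<noteq> 0" "smult (to_fract D) q = fract_poly r" using clear_denom by blast
  have "fract_poly (smult D P) = smult (to_fract D) (fract_poly P)" by simp
  also have "\<dots> = fract_poly d0 * smult (to_fract D) q" using q by (simp add: mult_smult_right)
  also have "\<dots> = fract_poly (d0 * r)" using D(2) by simp
  finally have eq: "smult D P = d0 * r" by (simp only: fract_poly_eq_iff)
  have P0: "P \<noteq> 0" using eP by auto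
  then have r0: "r \<noteq> 0" using eq D(1) by auto
  from order_decomp[OF D(1), of 0] obtain D' where
    D': "D = [:0,1:]^order 0 D * D'" "\<not> [:0,1:] dvd D'" by auto
  have pD': "poly D' 0 \<noteq> 0" using D'(2) dvd_iff_poly_eq_0[of 0 D'] by simp
  from eps_normalize[OF r0] obtain c r' where r': "r = smult (eps^c) r'" "ev0 r' \<noteq> 0" by blast
  have "smult (eps^(order 0 D)) (smult D' P) = smult (eps^(b+c)) (d1 * r')"
  proof -
    have "smult (eps^(order 0 D)) (smult D' P) = smult D P"
      using D'(1) by (simp add: eps_def)
    also have "\<dots> = smult (eps^b) d1 * smult (eps^c) r'" using eq d0 r' by simp
    also have "\<dots> = smult (eps^(b+c)) (d1 * r')" by (simp add: power_add mult_ac)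
    finally show ?thesis .
  qed
  moreover have "ev0 (smult D' P) \<noteq> 0" using pD' eP by simp
  moreover have "ev0 (d1 * r') \<noteq> 0" using e1 r'(2) by simp
  ultimately have "smult D' P = d1 * r'" by (rule eps_cancel)
  with pD' show ?thesis by blast
qed

lemma lemU:
  fixes P1 P2 P3 Q :: "'a::field poly poly"
  assumes g: "gcd3_one (ev0 P1) (ev0 P2) (ev0 P3)"
    and Qd: "\<And>d. d dvd fract_poly P1 \<Longrightarrow> d dvd fract_poly P2 \<Longrightarrow> d dvd fract_poly P3 \<Longrightarrow> d dvd fract_poly Q"
    and eQ: "ev0 Q \<noteq> 0" and dQ: "degree (ev0 Q) = degree Q"
  shows "gcd3_one (fract_poly P1) (fract_poly P2) (fract_poly P3)"
  unfolding gcd3_one_def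
proof (intro allI impI)
  fix d assume dd: "d dvd fract_poly P1 \<and> d dvd fract_poly P2 \<and> d dvd fract_poly P3"
  then have dQ': "d dvd fract_poly Q" using Qd by blast
  have Q0: "Q \<noteq> 0" using eQ by auto
  then have d0: "d \<noteq> 0" using dQ' by auto
  obtain D e0 where D: "D \<noteq> 0" "smult (to_fract D) d = fract_poly e0" using clear_denom by blast
  have e00: "e0 \<noteq> 0" using D d0 by (metis fract_poly_0 smult_eq_0_iff to_fract_eq_0_iff)
  have hd: "fract_poly e0 dvd X" if "d dvd X" for X
  proof -
    from that obtain k where k: "X = d * k" by (erule dvdE)
    have c0: "to_fract D \<noteq> 0" using D(1) by simp
    have "smult (to_fract D) d * smult (inverse (to_fract D)) k = d * k"
      using c0 by (simp add: mult_smult_left mult_smult_right smult_smult)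
    then have "X = fract_poly e0 * smult (inverse (to_fract D)) k"
      using k D(2) by simp
    then show ?thesis by (rule dvdI)
  qed
  from eps_normalize[OF e00] obtain b d1 where d1: "e0 = smult (eps^b) d1" "ev0 d1 \<noteq> 0" by blast
  have ev: "ev0 d1 dvd ev0 P" if "fract_poly e0 dvd fract_poly P" for P
  proof (cases "ev0 P = 0")
    case False
    from lemV[OF that d1 False] obtain D' r' where Dr: "poly D' 0 \<noteq> 0" "smult D' P = d1 * r'" by blast
    then have "smult (poly D' 0) (ev0 P) = ev0 d1 * ev0 r'" by (metis ev0_mult ev0_smult)
    then have "ev0 P = ev0 d1 * smult (inverse (poly D' 0)) (ev0 r')"
      using Dr(1) by (metis mult_smult_right smult_smult left_inverse smult_1_left)
    then show ?thesis by (rule dvdI)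
  qed simp
  have "ev0 d1 dvd 1" using g dd hd ev unfolding gcd3_one_def by blast
  then have deg1: "degree (ev0 d1) = 0" using d1(2) is_unit_iff_degree by blast
  from lemV[OF hd[OF dQ'] d1 eQ] obtain D' r' where Dr: "poly D' 0 \<noteq> 0" "smult D' Q = d1 * r'" by blast
  have D'0: "D' \<noteq> 0" using Dr(1) by auto
  have r'0: "r' \<noteq> 0" using Dr(2) D'0 Q0 by auto
  have dd1: "d1 \<noteq> 0" using d1(2) by auto
  have "degree Q = degree d1 + degree r'" using Dr(2) D'0 r'0 dd1 by (metis degree_mult_eq degree_smult_eq)
  moreover have "smult (poly D' 0) (ev0 Q) = ev0 d1 * ev0 r'" using Dr(2) by (metis ev0_mult ev0_smult)
  then have "degree (ev0 Q) = degree (ev0 d1) + degree (ev0 r')"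
    using Dr(1) eQ by (metis degree_mult_eq degree_smult_eq mult_zero_left mult_zero_right smult_eq_0_iff)
  ultimately have "degree d1 = 0" using deg1 dQ degree_ev0_le[of r'] by linarith
  then have "degree e0 = 0" using d1(1) by simp
  moreover have "degree (smult (to_fract D) d) = degree d" using D(1) by simp
  ultimately have "degree d = 0" using D(2) by simp
  then show "d dvd 1" using d0 is_unit_iff_degree by blast
qed



lemma deg3_le_iff: "deg3 A B C \<le> k \<longleftrightarrow> degree A \<le> k \<and> degree B \<le> k \<and> degree C \<le> k"
  unfolding deg3_def by auto

lemma deg3_cases: "degree A = deg3 A B C \<or> degree B = deg3 A B C \<or> degree C = deg3 A B C"
  unfolding deg3_def by auto

lemma min_syz_gcd:
  fixes p q r a b c :: "'a::field poly"
  assumes syz: "p*a + q*b + r*c = 0" and nz: "(p,q,r) \<noteq> (0,0,0)"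
    and min: "\<And>A B C. A*a + B*b + C*c = 0 \<Longrightarrow> (A,B,C) \<noteq> (0,0,0) \<Longrightarrow> deg3 p q r \<le> deg3 A B C"
  shows "gcd3_one p q r"
  unfolding gcd3_one_def
proof (intro allI impI)
  fix d assume dd: "d dvd p \<and> d dvd q \<and> d dvd r"
  then obtain p' q' r' where pqr: "p = d*p'" "q = d*q'" "r = d*r'" by (meson dvdE)
  have d0: "d \<noteq> 0" using nz pqr by auto
  have "d * (p'*a + q'*b + r'*c) = 0" using syz pqr by (simp add: algebra_simps)
  then have syz': "p'*a + q'*b + r'*c = 0" using d0 by simp
  have nz': "(p',q',r') \<noteq> (0,0,0)" using nz pqr by auto
  have m: "deg3 p q r \<le> deg3 p' q' r'" using min[OF syz' nz'] .
  have dle: "degree d \<le> deg3 p q r"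
  proof -
    have "degree d \<le> degree p" if "p' \<noteq> 0" using that d0 pqr by (simp add: degree_mult_eq)
    moreover have "degree d \<le> degree q" if "q' \<noteq> 0" using that d0 pqr by (simp add: degree_mult_eq)
    moreover have "degree d \<le> degree r" if "r' \<noteq> 0" using that d0 pqr by (simp add: degree_mult_eq)
    ultimately show ?thesis using nz' unfolding deg3_def by auto
  qed
  have comp: "degree d + degree x' \<le> deg3 p q r" if "x = d*x'" "degree x \<le> deg3 p q r" for x x'
  proof (cases "x' = 0")
    case True then show ?thesis using dle by simp
  next
    case False then show ?thesis using that d0 by (simp add: degree_mult_eq)
  qed
  have c1: "degree d + degree p' \<le> deg3 p q r" by (rule comp[OF pqr(1)]) (simp add: deg3_def)
  have c2: "degree d + degree q' \<le> deg3 p q r" by (rule comp[OF pqr(2)]) (simp add: deg3_def)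
  have c3: "degree d + degree r' \<le> deg3 p q r" by (rule comp[OF pqr(3)]) (simp add: deg3_def)
  have "degree d + deg3 p' q' r' \<le> deg3 p q r"
    using deg3_cases[of p' q' r'] c1 c2 c3 by auto
  with m have "degree d = 0" by simp
  then show "d dvd 1" using d0 is_unit_iff_degree by blast
qed

lemma top_coeff_nz:
  fixes p q r :: "'a::field poly"
  assumes "(p,q,r) \<noteq> (0,0,0)" "deg3 p q r = m"
  shows "(coeff p m, coeff q m, coeff r m) \<noteq> (0,0,0)"
proof -
  have h: "coeff x m \<noteq> 0" if "x \<noteq> 0" "degree x = m" for x :: "'a poly"
    using that by auto
  have h0: "coeff x 0 \<noteq> 0" if "x \<noteq> 0" "degree x = 0" for x :: "'a poly"
    using that leading_coeff_neq_0 by fastforce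
  show ?thesis
  proof (cases "m = 0")
    case True
    then have "degree p = 0" "degree q = 0" "degree r = 0" using assms(2) unfolding deg3_def by auto
    then show ?thesis using assms(1) h0 True by auto
  next
    case False
    have nz: "x \<noteq> 0" if "degree x = m" for x :: "'a poly" using that False by auto
    show ?thesis using deg3_cases[of p q r] assms(2) h nz by auto
  qed
qed

lemma reduce_step:
  fixes p q r a b c :: "'a::field poly"
  assumes dL: "deg3 p q r \<le> mu" and lnz: "(coeff p mu, coeff q mu, coeff r mu) \<noteq> (0,0,0)"
    and dv: "deg3 a b c \<le> n" and mun: "mu \<le> n - mu"
  shows "deg3 A B C = D \<Longrightarrow> q*C - r*B = a \<Longrightarrow> r*A - p*C = b \<Longrightarrow> p*B - q*A = c \<Longrightarrow>
    \<exists>A' B' C'. q*C' - r*B' = a \<and> r*A' - p*C' = b \<and> p*B' - q*A' = c \<and> deg3 A' B' C' \<le> n - mu"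
proof (induction D arbitrary: A B C rule: less_induct)
  case (less D)
  show ?case
  proof (cases "D \<le> n - mu")
    case True then show ?thesis using less.prems by blast
  next
    case False
    then have Dg: "D > n - mu" by simp
    have dA: "degree A \<le> D" "degree B \<le> D" "degree C \<le> D" using less.prems(1) unfolding deg3_def by auto
    have dp: "degree p \<le> mu" "degree q \<le> mu" "degree r \<le> mu" using dL unfolding deg3_def by auto
    have da: "degree a \<le> n" "degree b \<le> n" "degree c \<le> n" using dv unfolding deg3_def by auto
    define l1 l2 l3 where "l1 = coeff p mu" "l2 = coeff q mu" "l3 = coeff r mu"
    define T1 T2 T3 where "T1 = coeff A D" "T2 = coeff B D" "T3 = coeff C D"
    have big: "n < mu + D" using Dg mun by simp
    have e1: "l2*T3 - l3*T2 = 0"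
    proof -
      have "coeff a (mu + D) = 0" using da big by (intro coeff_eq_0) simp
      moreover have "coeff a (mu + D) = l2*T3 - l3*T2"
        using less.prems(2) coeff_mult_bound[OF dp(2) dA(3)] coeff_mult_bound[OF dp(3) dA(2)]
        unfolding l1_l2_l3_def T1_T2_T3_def by (simp flip: less.prems(2))
      ultimately show ?thesis by simp
    qed
    have e2: "l3*T1 - l1*T3 = 0"
    proof -
      have "coeff b (mu + D) = 0" using da big by (intro coeff_eq_0) simp
      moreover have "coeff b (mu + D) = l3*T1 - l1*T3"
        using coeff_mult_bound[OF dp(3) dA(1)] coeff_mult_bound[OF dp(1) dA(3)]
        unfolding l1_l2_l3_def T1_T2_T3_def by (simp flip: less.prems(3))
      ultimately show ?thesis by simp
    qed
    have e3: "l1*T2 - l2*T1 = 0"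
    proof -
      have "coeff c (mu + D) = 0" using da big by (intro coeff_eq_0) simp
      moreover have "coeff c (mu + D) = l1*T2 - l2*T1"
        using coeff_mult_bound[OF dp(1) dA(2)] coeff_mult_bound[OF dp(2) dA(1)]
        unfolding l1_l2_l3_def T1_T2_T3_def by (simp flip: less.prems(4))
      ultimately show ?thesis by simp
    qed
    obtain z1 z2 z3 where z: "z1*l1 + z2*l2 + z3*l3 = 1"
    proof -
      consider "l1 \<noteq> 0" | "l2 \<noteq> 0" | "l3 \<noteq> 0" using lnz unfolding l1_l2_l3_def by auto
      then show ?thesis
      proof cases
        case 1 then show ?thesis using that[of "inverse l1" 0 0] by simp
      next
        case 2 then show ?thesis using that[of 0 "inverse l2" 0] by simp
      next
        case 3 then show ?thesis using that[of 0 0 "inverse l3"] by simp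
      qed
    qed
    define lam where "lam = z1*T1 + z2*T2 + z3*T3"
    have h1: "T2*l3 = T3*l2" using e1 by (simp add: algebra_simps)
    have h2: "T3*l1 = T1*l3" using e2 by (simp add: algebra_simps)
    have h3: "T1*l2 = T2*l1" using e3 by (simp add: algebra_simps)
    have T': "T1 = lam*l1 \<and> T2 = lam*l2 \<and> T3 = lam*l3"
      using cross_zero_par[where xa=T1 and xb=T2 and xc=T3 and ya=l1 and yb=l2 and yc=l3 and za=z1 and zb=z2 and zc=z3, OF h1 h2 h3 z] unfolding lam_def by simp
    then have T: "T1 = lam*l1" "T2 = lam*l2" "T3 = lam*l3" by auto
    define A' B' C' where "A' = A - monom lam (D - mu) * p" "B' = B - monom lam (D - mu) * q"
      "C' = C - monom lam (D - mu) * r"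
    have muD: "mu \<le> D" using Dg mun by simp
    have dred: "degree X' \<le> D - 1" if X': "X' = X - monom lam (D - mu) * x" and dX: "degree X \<le> D"
      and dx: "degree x \<le> mu" and cX: "coeff X D = lam * coeff x mu" for X X' x :: "'a poly"
    proof (rule degree_le, intro allI impI)
      fix i assume "D - 1 < i"
      then have iD: "D \<le> i" by simp
      have c1: "coeff (monom lam (D - mu) * x) i = lam * coeff x (i - (D - mu))"
        using iD muD by (simp add: coeff_monom_mult)
      show "coeff X' i = 0"
      proof (cases "i = D")
        case True
        then have "i - (D - mu) = mu" using muD by simp
        then show ?thesis using X' c1 cX True by simp
      next
        case False
        then have "coeff X i = 0" using iD dX by (intro coeff_eq_0) simp
        moreover have "coeff x (i - (D - mu)) = 0" using False iD muD dx by (intro coeff_eq_0) simp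
        ultimately show ?thesis using X' c1 by simp
      qed
    qed
    have "degree A' \<le> D - 1" using dred[OF A'_B'_C'_def(1) dA(1) dp(1)] T unfolding T1_T2_T3_def l1_l2_l3_def by simp
    moreover have "degree B' \<le> D - 1" using dred[OF A'_B'_C'_def(2) dA(2) dp(2)] T unfolding T1_T2_T3_def l1_l2_l3_def by simp
    moreover have "degree C' \<le> D - 1" using dred[OF A'_B'_C'_def(3) dA(3) dp(3)] T unfolding T1_T2_T3_def l1_l2_l3_def by simp
    ultimately have lt: "deg3 A' B' C' < D" using Dg unfolding deg3_def by auto
    have "q*C' - r*B' = a" unfolding A'_B'_C'_def using less.prems(2) by (simp add: algebra_simps)
    moreover have "r*A' - p*C' = b" unfolding A'_B'_C'_def using less.prems(3) by (simp add: algebra_simps)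
    moreover have "p*B' - q*A' = c" unfolding A'_B'_C'_def using less.prems(4) by (simp add: algebra_simps)
    ultimately show ?thesis using less.IH[OF lt refl] by blast
  qed
qed



lemma lower_bound:
  fixes S1 S2 S3 V1 V2 V3 L1 L2 L3 w1 w2 w3 z1 z2 z3 :: "'b::field poly"
  assumes sv: "S1*V1+S2*V2+S3*V3 = 0" and lv: "L1*V1+L2*V2+L3*V3 = 0"
    and wv: "w1*V1+w2*V2+w3*V3 = 1" and zl: "z1*L1+z2*L2+z3*L3 = 1"
    and snz: "(S1,S2,S3) \<noteq> (0,0,0)"
    and dS: "deg3 S1 S2 S3 \<le> s" and dL: "deg3 L1 L2 L3 = l"
    and dV: "deg3 V1 V2 V3 = N" and lt: "s + l < N"
  shows "l \<le> s"
proof -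
  define X1 X2 X3 where "X1 = S2*L3 - S3*L2" "X2 = S3*L1 - S1*L3" "X3 = S1*L2 - S2*L1"
  have "X2*V3 - X3*V2 = L1*(S1*V1+S2*V2+S3*V3) - S1*(L1*V1+L2*V2+L3*V3)"
    unfolding X1_X2_X3_def by (simp add: algebra_simps)
  then have h1: "X2*V3 = X3*V2" using sv lv by simp
  have "X3*V1 - X1*V3 = L2*(S1*V1+S2*V2+S3*V3) - S2*(L1*V1+L2*V2+L3*V3)"
    unfolding X1_X2_X3_def by (simp add: algebra_simps)
  then have h2: "X3*V1 = X1*V3" using sv lv by simp
  have "X1*V2 - X2*V1 = L3*(S1*V1+S2*V2+S3*V3) - S3*(L1*V1+L2*V2+L3*V3)"
    unfolding X1_X2_X3_def by (simp add: algebra_simps)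
  then have h3: "X1*V2 = X2*V1" using sv lv by simp
  define g where "g = w1*X1+w2*X2+w3*X3"
  have X: "X1 = g*V1" "X2 = g*V2" "X3 = g*V3"
    using cross_zero_par[where xa=X1 and xb=X2 and xc=X3 and ya=V1 and yb=V2 and yc=V3
        and za=w1 and zb=w2 and zc=w3, OF h1 h2 h3 wv] unfolding g_def by auto
  have dSi: "degree S1 \<le> s" "degree S2 \<le> s" "degree S3 \<le> s" using dS unfolding deg3_def by auto
  have dLi: "degree L1 \<le> l" "degree L2 \<le> l" "degree L3 \<le> l" using dL unfolding deg3_def by auto
  have dprod: "degree (A*B - C*E) \<le> s + l" if "degree A \<le> s" "degree B \<le> l" "degree C \<le> s" "degree E \<le> l"
    for A B C E :: "'b poly"
  proof -
    have "degree (A*B) \<le> s + l" using that degree_mult_le[of A B] by linarith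
    moreover have "degree (C*E) \<le> s + l" using that degree_mult_le[of C E] by linarith
    ultimately show ?thesis using degree_diff_le by blast
  qed
  have dX: "degree X1 \<le> s + l" "degree X2 \<le> s + l" "degree X3 \<le> s + l"
    unfolding X1_X2_X3_def using dSi dLi by (auto intro!: dprod)
  have g0: "g = 0"
  proof (rule ccontr)
    assume gn: "g \<noteq> 0"
    have N0: "N > 0" using lt by simp
    have "\<exists>V. (V = V1 \<or> V = V2 \<or> V = V3) \<and> degree V = N" using deg3_cases[of V1 V2 V3] dV by auto
    then obtain V X where VX: "(V = V1 \<and> X = X1) \<or> (V = V2 \<and> X = X2) \<or> (V = V3 \<and> X = X3)" "degree V = N"
      by blast
    have XV: "X = g * V" "degree X \<le> s + l" using VX(1) X dX by auto
    have "V \<noteq> 0" using VX(2) N0 by auto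
    then have "degree X = degree g + N" using XV(1) gn VX(2) by (simp add: degree_mult_eq)
    then show False using XV(2) lt by simp
  qed
  then have Xz: "X1 = 0" "X2 = 0" "X3 = 0" using X by auto
  have k1: "S2*L3 = S3*L2" "S3*L1 = S1*L3" "S1*L2 = S2*L1" using Xz unfolding X1_X2_X3_def by auto
  define h where "h = z1*S1+z2*S2+z3*S3"
  have S: "S1 = h*L1" "S2 = h*L2" "S3 = h*L3"
    using cross_zero_par[where xa=S1 and xb=S2 and xc=S3 and ya=L1 and yb=L2 and yc=L3
        and za=z1 and zb=z2 and zc=z3, OF k1 zl] unfolding h_def by auto
  have h0: "h \<noteq> 0" using snz S by auto
  show "l \<le> s"
  proof (cases "l = 0")
    case False
    have "\<exists>L S. ((L = L1 \<and> S = S1) \<or> (L = L2 \<and> S = S2) \<or> (L = L3 \<and> S = S3)) \<and> degree L = l"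
      using deg3_cases[of L1 L2 L3] dL by auto
    then obtain L S' where LS: "(L = L1 \<and> S' = S1) \<or> (L = L2 \<and> S' = S2) \<or> (L = L3 \<and> S' = S3)" "degree L = l"
      by blast
    have "S' = h * L" "degree S' \<le> s" using LS(1) S dSi by auto
    moreover have "L \<noteq> 0" using LS(2) False by auto
    ultimately show ?thesis using h0 LS(2) by (simp add: degree_mult_eq)
  qed simp
qed

lemma Ndeg:
  fixes X Y :: "'a::field poly"
  assumes "degree X \<le> m" "degree Y \<le> m"
  shows "degree (monom (coeff X m) (Suc k) * Y - monom (coeff Y m) (Suc k) * X) \<le> k + m"
proof (rule degree_le, intro allI impI)
  fix i assume i: "k + m < i"
  then have "coeff (monom (coeff X m) (Suc k) * Y - monom (coeff Y m) (Suc k) * X) i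
      = coeff X m * coeff Y (i - Suc k) - coeff Y m * coeff X (i - Suc k)"
    by (simp add: coeff_monom_mult)
  also have "\<dots> = 0"
  proof (cases "i - Suc k = m")
    case True then show ?thesis by simp
  next
    case False
    then have "i - Suc k > m" using i by simp
    then show ?thesis using assms by (simp add: coeff_eq_0)
  qed
  finally show "coeff (monom (coeff X m) (Suc k) * Y - monom (coeff Y m) (Suc k) * X) i = 0" .
qed

lemma lift_smult: "lift (smult y p) = smult [:y:] (lift p)"
  by (rule poly_eqI) simp

lemma deg_pert: "degree A \<le> n \<Longrightarrow> degree N \<le> n \<Longrightarrow> degree (lift A + smult eps (lift N)) \<le> n"
proof -
  assume a: "degree A \<le> n" "degree N \<le> n"
  have "degree (smult eps (lift N)) \<le> n" using a(2) degree_smult_le[of eps "lift N"] by simp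
  then show ?thesis using a(1) degree_add_le[of "lift A" n "smult eps (lift N)"] by simp
qed



theorem theorem1p2:
  fixes a b c :: "'a::alg_closed_field poly" and n mu :: nat
  assumes "n \<ge> 1" and "mu < n div 2" and "(a, b, c) \<in> Pmu mu n"
  shows "\<exists>ae be ce :: 'a poly poly.
           gcd3_one (to_Keps ae) (to_Keps be) (to_Keps ce) \<and>
           deg3 (to_Keps ae) (to_Keps be) (to_Keps ce) = n \<and>
           syz_class (to_Keps ae) (to_Keps be) (to_Keps ce) = syz_class a b c + 1 \<and>
           eval_eps0 ae = a \<and> eval_eps0 be = b \<and> eval_eps0 ce = c"
proof -
  from assms(3) have c0: "c \<noteq> 0" and g: "gcd3_one a b c" and dn: "deg3 a b c = n"
    and cls: "syz_class a b c = mu"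
    unfolding Pmu_def Pn_def by auto
  have "2 * (n div 2) \<le> n" by simp
  then have mu2: "2*mu + 2 \<le> n" using assms(2) by linarith
  define Pr where "Pr d = (\<exists>A B C. (A,B,C) \<in> syz a b c \<and> (A,B,C) \<noteq> (0,0,0) \<and> deg3 A B C = d)" for d
  have ex: "Pr (deg3 c 0 (-a))" unfolding Pr_def syz_def using c0
    by (intro exI[of _ c] exI[of _ 0] exI[of _ "-a"]) (simp add: algebra_simps)
  have "Pr (Least Pr)" by (rule LeastI[where P=Pr, OF ex])
  moreover have "Least Pr = mu" using cls unfolding syz_class_def Pr_def by simp
  ultimately obtain p q r where syz: "p*a + q*b + r*c = 0" and nz: "(p,q,r) \<noteq> (0,0,0)"
    and dmu: "deg3 p q r = mu" unfolding Pr_def syz_def by auto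
  have min: "deg3 p q r \<le> deg3 A B C" if "A*a + B*b + C*c = 0" "(A,B,C) \<noteq> (0,0,0)" for A B C
  proof -
    have "Pr (deg3 A B C)" unfolding Pr_def syz_def using that by blast
    then have "Least Pr \<le> deg3 A B C" by (rule Least_le)
    then show ?thesis using \<open>Least Pr = mu\<close> dmu by simp
  qed
  have gL: "gcd3_one p q r" using min_syz_gcd[OF syz nz min] by blast
  obtain x1 x2 x3 where bz: "x1*p + x2*q + x3*r = 1" using bezout3[OF gL] by blast
  define A0 B0 C0 where "A0 = b*x3 - c*x2" "B0 = c*x1 - a*x3" "C0 = a*x2 - b*x1"
  have "q*C0 - r*B0 = a*(x1*p + x2*q + x3*r) - x1*(p*a + q*b + r*c)"
    unfolding A0_B0_C0_def by (simp add: algebra_simps)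
  then have cr1: "q*C0 - r*B0 = a" using bz syz by simp
  have "r*A0 - p*C0 = b*(x1*p + x2*q + x3*r) - x2*(p*a + q*b + r*c)"
    unfolding A0_B0_C0_def by (simp add: algebra_simps)
  then have cr2: "r*A0 - p*C0 = b" using bz syz by simp
  have "p*B0 - q*A0 = c*(x1*p + x2*q + x3*r) - x3*(p*a + q*b + r*c)"
    unfolding A0_B0_C0_def by (simp add: algebra_simps)
  then have cr3: "p*B0 - q*A0 = c" using bz syz by simp
  have lnz: "(coeff p mu, coeff q mu, coeff r mu) \<noteq> (0,0,0)" using top_coeff_nz[OF nz dmu] .
  have mun: "mu \<le> n - mu" using mu2 by simp
  have d1: "deg3 p q r \<le> mu" using dmu by simp
  have d2: "deg3 a b c \<le> n" using dn by simp
  have "\<exists>A' B' C'. q*C' - r*B' = a \<and> r*A' - p*C' = b \<and> p*B' - q*A' = c \<and> deg3 A' B' C' \<le> n - mu"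
    by (rule reduce_step[OF d1 lnz d2 mun refl cr1 cr2 cr3])
  then obtain P' Q' R' where crs: "q*R' - r*Q' = a" "r*P' - p*R' = b" "p*Q' - q*P' = c"
    and dL': "deg3 P' Q' R' \<le> n - mu" by blast
  define m where "m = n - mu"
  have nm: "n = mu + m" using mu2 unfolding m_def by simp
  have dp: "degree p \<le> mu" "degree q \<le> mu" "degree r \<le> mu" using dmu unfolding deg3_def by auto
  have dP: "degree P' \<le> m" "degree Q' \<le> m" "degree R' \<le> m" using dL' unfolding deg3_def m_def by auto
  have da: "degree a \<le> n" "degree b \<le> n" "degree c \<le> n" using dn unfolding deg3_def by auto
  define l1 l2 l3 where "l1 = coeff p mu" "l2 = coeff q mu" "l3 = coeff r mu"
  define k1 k2 k3 where "k1 = coeff P' m" "k2 = coeff Q' m" "k3 = coeff R' m"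
  have ta: "coeff a n = l2*k3 - l3*k2"
    unfolding nm l1_l2_l3_def k1_k2_k3_def
    using coeff_mult_bound[OF dp(2) dP(3)] coeff_mult_bound[OF dp(3) dP(2)] by (simp flip: crs(1))
  have tb: "coeff b n = l3*k1 - l1*k3"
    unfolding nm l1_l2_l3_def k1_k2_k3_def
    using coeff_mult_bound[OF dp(3) dP(1)] coeff_mult_bound[OF dp(1) dP(3)] by (simp flip: crs(2))
  have tc: "coeff c n = l1*k2 - l2*k1"
    unfolding nm l1_l2_l3_def k1_k2_k3_def
    using coeff_mult_bound[OF dp(1) dP(2)] coeff_mult_bound[OF dp(2) dP(1)] by (simp flip: crs(3))
  have vnz: "(coeff a n, coeff b n, coeff c n) \<noteq> (0,0,0)" using top_coeff_nz[OF _ dn] c0 by auto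
  have wnz: "(l2*k3 - l3*k2, l3*k1 - l1*k3, l1*k2 - l2*k1) \<noteq> (0,0,0)" using vnz ta tb tc by simp
  then have knz: "(k1,k2,k3) \<noteq> (0,0,0)" by auto
  obtain y1 y2 y3 where y: "y1*k1 + y2*k2 + y3*k3 = 0" "y1*l1 + y2*l2 + y3*l3 \<noteq> 0"
  proof -
    consider "l2*k3 - l3*k2 \<noteq> 0" | "l3*k1 - l1*k3 \<noteq> 0" | "l1*k2 - l2*k1 \<noteq> 0" using wnz by auto
    then show ?thesis
    proof cases
      case 1 then show ?thesis using that[of 0 k3 "-k2"] by (simp add: algebra_simps)
    next
      case 2 then show ?thesis using that[of "-k3" 0 k1] by (simp add: algebra_simps)
    next
      case 3 then show ?thesis using that[of k2 "-k1" 0] by (simp add: algebra_simps)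
    qed
  qed
  define M1 M2 M3 where "M1 = monom k1 (Suc mu)" "M2 = monom k2 (Suc mu)" "M3 = monom k3 (Suc mu)"
  define Pe Qe Re where "Pe = lift p + smult eps (lift M1)" "Qe = lift q + smult eps (lift M2)"
    "Re = lift r + smult eps (lift M3)"
  define Ae Be Ce where "Ae = Qe * lift R' - Re * lift Q'" "Be = Re * lift P' - Pe * lift R'"
    "Ce = Pe * lift Q' - Qe * lift P'"
  have Ae': "Ae = lift (q*R' - r*Q') + smult eps (lift (M2*R' - M3*Q'))"
    unfolding Ae_Be_Ce_def Pe_Qe_Re_def by (simp add: algebra_simps mult_smult_left smult_diff_right)
  have Be': "Be = lift (r*P' - p*R') + smult eps (lift (M3*P' - M1*R'))"
    unfolding Ae_Be_Ce_def Pe_Qe_Re_def by (simp add: algebra_simps mult_smult_left smult_diff_right)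
  have Ce': "Ce = lift (p*Q' - q*P') + smult eps (lift (M1*Q' - M2*P'))"
    unfolding Ae_Be_Ce_def Pe_Qe_Re_def by (simp add: algebra_simps mult_smult_left smult_diff_right)
  have evs: "ev0 Ae = a" "ev0 Be = b" "ev0 Ce = c" "ev0 Pe = p" "ev0 Qe = q" "ev0 Re = r"
    using crs unfolding Ae' Be' Ce' Pe_Qe_Re_def by simp_all
  have nd1: "degree (M2*R' - M3*Q') \<le> n"
    using Ndeg[OF dP(2) dP(3), of mu] unfolding M1_M2_M3_def k1_k2_k3_def nm by simp
  have nd2: "degree (M3*P' - M1*R') \<le> n"
    using Ndeg[OF dP(3) dP(1), of mu] unfolding M1_M2_M3_def k1_k2_k3_def nm by simp
  have nd3: "degree (M1*Q' - M2*P') \<le> n"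
    using Ndeg[OF dP(1) dP(2), of mu] unfolding M1_M2_M3_def k1_k2_k3_def nm by simp
  have dAe1: "degree Ae \<le> n" unfolding Ae' by (rule deg_pert) (use da crs nd1 in simp_all)
  have dAe2: "degree Be \<le> n" unfolding Be' by (rule deg_pert) (use da crs nd2 in simp_all)
  have dAe3: "degree Ce \<le> n" unfolding Ce' by (rule deg_pert) (use da crs nd3 in simp_all)
  note dAe = dAe1 dAe2 dAe3
  have geA: "degree a \<le> degree Ae" "degree b \<le> degree Be" "degree c \<le> degree Ce"
    using degree_ev0_le evs by metis+
  have deg3E: "deg3 Ae Be Ce = n"
  proof -
    have "deg3 Ae Be Ce \<le> n" using dAe unfolding deg3_def by auto
    moreover have "n \<le> deg3 Ae Be Ce" using geA dn unfolding deg3_def by auto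
    ultimately show ?thesis by simp
  qed
  have gE: "gcd3_one (fract_poly Ae) (fract_poly Be) (fract_poly Ce)"
  proof -
    have gev: "gcd3_one (ev0 Ae) (ev0 Be) (ev0 Ce)" using g evs by simp
    have n0: "n \<noteq> 0" using assms(1) by simp
    consider "degree a = n" | "degree b = n" | "degree c = n" using deg3_cases[of a b c] dn by auto
    then show ?thesis
    proof cases
      case 1
      have "ev0 Ae \<noteq> 0" using 1 n0 evs by auto
      moreover have "degree (ev0 Ae) = degree Ae" using 1 evs dAe geA by simp
      ultimately show ?thesis by (intro lemU[OF gev, of Ae]) auto
    next
      case 2
      have "ev0 Be \<noteq> 0" using 2 n0 evs by auto
      moreover have "degree (ev0 Be) = degree Be" using 2 evs dAe geA by simp
      ultimately show ?thesis by (intro lemU[OF gev, of Be]) auto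
    next
      case 3
      have "ev0 Ce \<noteq> 0" using 3 n0 evs by auto
      moreover have "degree (ev0 Ce) = degree Ce" using 3 evs dAe geA by simp
      ultimately show ?thesis by (intro lemU[OF gev, of Ce]) auto
    qed
  qed
  have gP: "gcd3_one (fract_poly Pe) (fract_poly Qe) (fract_poly Re)"
  proof -
    have gev: "gcd3_one (ev0 Pe) (ev0 Qe) (ev0 Re)" using gL evs by simp
    define u where "u = smult y1 p + smult y2 q + smult y3 r"
    define Qy where "Qy = smult [:y1:] Pe + smult [:y2:] Qe + smult [:y3:] Re"
    have "smult y1 M1 + smult y2 M2 + smult y3 M3 = monom (y1*k1 + y2*k2 + y3*k3) (Suc mu)"
      unfolding M1_M2_M3_def by (simp add: smult_monom add_monom)
    then have Mz: "smult y1 M1 + smult y2 M2 + smult y3 M3 = 0" using y(1) by simp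
    have "Qy = lift u + smult eps (lift (smult y1 M1 + smult y2 M2 + smult y3 M3))"
      unfolding Qy_def Pe_Qe_Re_def u_def by (simp add: lift_smult smult_add_right algebra_simps)
    then have Qy: "Qy = lift u" using Mz by simp
    have "coeff u mu = y1*l1 + y2*l2 + y3*l3" unfolding u_def l1_l2_l3_def by simp
    then have u0: "u \<noteq> 0" using y(2) by auto
    show ?thesis
    proof (rule lemU[OF gev, of Qy])
      fix d assume "d dvd fract_poly Pe" "d dvd fract_poly Qe" "d dvd fract_poly Re"
      then show "d dvd fract_poly Qy" unfolding Qy_def by (simp add: dvd_add dvd_smult)
    next
      show "ev0 Qy \<noteq> 0" using Qy u0 by simp
    next
      show "degree (ev0 Qy) = degree Qy" using Qy by simp
    qed
  qed
  have dPe: "deg3 Pe Qe Re = Suc mu"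
  proof -
    have up: "degree (lift x + smult eps (lift (monom k (Suc mu)))) \<le> Suc mu" if "degree x \<le> mu" for x k
    proof -
      have "degree (smult eps (lift (monom k (Suc mu)))) \<le> Suc mu"
        using degree_smult_le[of eps "lift (monom k (Suc mu))"] degree_monom_le[of k "Suc mu"] by simp
      then show ?thesis using that degree_add_le[of "lift x" "Suc mu"] by simp
    qed
    have lo: "Suc mu \<le> degree (lift x + smult eps (lift (monom k (Suc mu))))" if "degree x \<le> mu" "k \<noteq> 0" for x k
    proof (rule le_degree)
      have "coeff x (Suc mu) = 0" using that by (intro coeff_eq_0) simp
      then show "coeff (lift x + smult eps (lift (monom k (Suc mu)))) (Suc mu) \<noteq> 0"
        using that by (simp add: eps_def)
    qed
    have u1: "degree Pe \<le> Suc mu" unfolding Pe_Qe_Re_def M1_M2_M3_def by (rule up[OF dp(1)])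
    have u2: "degree Qe \<le> Suc mu" unfolding Pe_Qe_Re_def M1_M2_M3_def by (rule up[OF dp(2)])
    have u3: "degree Re \<le> Suc mu" unfolding Pe_Qe_Re_def M1_M2_M3_def by (rule up[OF dp(3)])
    have "deg3 Pe Qe Re \<le> Suc mu" unfolding deg3_def using u1 u2 u3 by simp
    moreover have "Suc mu \<le> deg3 Pe Qe Re"
    proof -
      consider "k1 \<noteq> 0" | "k2 \<noteq> 0" | "k3 \<noteq> 0" using knz by auto
      then show ?thesis
      proof cases
        case 1
        have "Suc mu \<le> degree Pe" unfolding Pe_Qe_Re_def M1_M2_M3_def by (rule lo[OF dp(1) 1])
        then show ?thesis unfolding deg3_def by simp
      next
        case 2
        have "Suc mu \<le> degree Qe" unfolding Pe_Qe_Re_def M1_M2_M3_def by (rule lo[OF dp(2) 2])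
        then show ?thesis unfolding deg3_def by simp
      next
        case 3
        have "Suc mu \<le> degree Re" unfolding Pe_Qe_Re_def M1_M2_M3_def by (rule lo[OF dp(3) 3])
        then show ?thesis unfolding deg3_def by simp
      qed
    qed
    ultimately show ?thesis by simp
  qed
  define fa fb fc where "fa = fract_poly Ae" "fb = fract_poly Be" "fc = fract_poly Ce"
  define fp fq fr where "fp = fract_poly Pe" "fq = fract_poly Qe" "fr = fract_poly Re"
  have "Pe*Ae + Qe*Be + Re*Ce = 0" unfolding Ae_Be_Ce_def by (simp add: algebra_simps)
  then have fsyz: "fp*fa + fq*fb + fr*fc = 0" unfolding fa_fb_fc_def fp_fq_fr_def
    by (metis fract_poly_add fract_poly_mult fract_poly_0)
  obtain w1 w2 w3 where wv: "w1*fa + w2*fb + w3*fc = 1" using bezout3[OF gE] unfolding fa_fb_fc_def by blast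
  obtain z1 z2 z3 where zl: "z1*fp + z2*fq + z3*fr = 1" using bezout3[OF gP] unfolding fp_fq_fr_def by blast
  have dfa: "deg3 fa fb fc = n" using deg3E unfolding fa_fb_fc_def deg3_def by simp
  have dfp: "deg3 fp fq fr = Suc mu" using dPe unfolding fp_fq_fr_def deg3_def by simp
  have cls': "syz_class fa fb fc = Suc mu"
    unfolding syz_class_def
  proof (rule Least_equality)
    have "(fp,fq,fr) \<noteq> (0,0,0)" using dfp unfolding deg3_def by auto
    then show "\<exists>A B C. (A, B, C) \<in> syz fa fb fc \<and> (A, B, C) \<noteq> (0, 0, 0) \<and> deg3 A B C = Suc mu"
      using fsyz dfp unfolding syz_def by blast
  next
    fix y assume "\<exists>A B C. (A, B, C) \<in> syz fa fb fc \<and> (A, B, C) \<noteq> (0, 0, 0) \<and> deg3 A B C = y"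
    then obtain A B C where ABC: "A*fa + B*fb + C*fc = 0" "(A,B,C) \<noteq> (0,0,0)" "deg3 A B C = y"
      unfolding syz_def by auto
    show "Suc mu \<le> y"
    proof (rule ccontr)
      assume "\<not> Suc mu \<le> y"
      then have "y \<le> mu" by simp
      then have "y + Suc mu < n" using mu2 by simp
      from lower_bound[OF ABC(1) fsyz wv zl ABC(2) _ dfp dfa this] ABC(3)
      have "Suc mu \<le> y" by simp
      with \<open>\<not> Suc mu \<le> y\<close> show False by simp
    qed
  qed
  show ?thesis
    using gE deg3E cls' cls evs unfolding to_Keps_eq fa_fb_fc_def
    by (intro exI[of _ Ae] exI[of _ Be] exI[of _ Ce]) (simp add: deg3_def)
qed


end
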